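(* $\mathsf{UCQ}(\mathsf{BID})\subsetneq\mathsf{FO}(\mathsf{BID})$.
   Context: Fix a countably infinite universe $U$. A database schema is a finite nonempty set of relation symbols with arities; facts are $R(u_1,\dots,u_{\mathrm{ar}(R)})$ with $u_i\in U$; an instance is a finite set of facts; $\mathrm{adom}(D)$ is the set of elements of $U$ occurring in $D$. A probabilistic database (PDB) is a discrete probability space $(\mathbb D,P)$ with $\mathbb D$ a nonempty countable set of instances; $\mathrm{facts}(\mathcal D)$ is the union of its instances of positive probability. A PDB $\mathcal I$ is block-independent disjoint ($\mathsf{BID}$) if $\mathrm{facts}(\mathcal I)$ can be partitioned into blocks such that for facts $f_1,\dots,f_k$ from pairwise different blocks $\Pr(f_1\in I,\dots,f_k\in I)=\prod_i\Pr(f_i\in I)$, and distinct facts $f,f'$ of the same block satisfy $\Pr(f\in I\text{ and }f'\in I)=0$. First-order formulas use relational atoms $R(\bar u)$ ($\bar u$ variables or constants) and equality atoms and are evaluated under active domain semantics (quantifiers range over $\mathrm{adom}(D)$ and the formula's constants). A union of conjunctive queries (UCQ) is a formula built from atoms using only $\exists,\wedge,\vee$. An FO-view (UCQ-view) consists of one first-order (UCQ) formula $\Phi_R(x_1,\dots,x_{\mathrm{ar}(R)})$ per output relation $R$, mapping $D$ to the instance of all $R(\bar a)$ with $\bar a$ over $\mathrm{adom}(D)\cup\mathrm{adom}(\Phi_R)$ and $D\models\Phi_R[\bar a]$. The image of a PDB $(\mathbb D,P)$ under a view $V$ is the PDB on $V(\mathbb D)$ with $P'(\{D'\})=P(\{D:V(D)=D'\})$.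 $\mathsf{UCQ}(\mathsf{BID})$ and $\mathsf{FO}(\mathsf{BID})$ are the classes of images of BID-PDBs under UCQ-views and FO-views, respectively. *)

theory Defs
  imports "HOL-Probability.Probability" "HOL-Library.Countable" "HOL-Library.Infinite_Typeclass"
begin

text \<open>A relation symbol is a pair (name, arity). The universe U is a type 'u of
  class countable and infinite.\<close>
type_synonym rel = "nat \<times> nat"

definition arity :: "rel \<Rightarrow> nat" where "arity R = snd R"

definition schema :: "rel set \<Rightarrow> bool" where
  "schema S \<longleftrightarrow> finite S \<and> S \<noteq> {}"

type_synonym 'u fact = "rel \<times> 'u list"

definition fact_over :: "rel set \<Rightarrow> 'u fact \<Rightarrow> bool" where
  "fact_over S f \<longleftrightarrow> fst f \<in> S \<and> length (snd f) = arity (fst f)"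

definition instance_over :: "rel set \<Rightarrow> 'u fact set \<Rightarrow> bool" where
  "instance_over S D \<longleftrightarrow> finite D \<and> (\<forall>f\<in>D. fact_over S f)"

definition adom :: "'u fact set \<Rightarrow> 'u set" where
  "adom D = (\<Union>f\<in>D. set (snd f))"

text \<open>A PDB over schema S is given by a discrete distribution on instances over S
  (the sample space is the support, which is countable and nonempty).\<close>
type_synonym 'u pdb = "rel set \<times> 'u fact set pmf"

definition is_pdb :: "'u pdb \<Rightarrow> bool" where
  "is_pdb \<D> \<longleftrightarrow> schema (fst \<D>) \<and> (\<forall>D\<in>set_pmf (snd \<D>). instance_over (fst \<D>) D)"

definition pdb_facts :: "'u fact set pmf \<Rightarrow> 'u fact set" where
  "pdb_facts P = \<Union>(set_pmf P)"

definition is_BID :: "'u pdb \<Rightarrow> bool" where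
  "is_BID \<D> \<longleftrightarrow> is_pdb \<D> \<and>
     (\<exists>B. (\<Union>B = pdb_facts (snd \<D>)) \<and> {} \<notin> B \<and>
          (\<forall>X\<in>B. \<forall>Y\<in>B. X \<noteq> Y \<longrightarrow> X \<inter> Y = {}) \<and>
          (\<forall>F. finite F \<and> F \<subseteq> pdb_facts (snd \<D>) \<and>
               (\<forall>f\<in>F. \<forall>f'\<in>F. \<forall>X\<in>B. f \<noteq> f' \<and> f \<in> X \<longrightarrow> f' \<notin> X) \<longrightarrow>
               measure_pmf.prob (snd \<D>) {I. F \<subseteq> I} =
               (\<Prod>f\<in>F. measure_pmf.prob (snd \<D>) {I. f \<in> I})) \<and>
          (\<forall>X\<in>B. \<forall>f\<in>X. \<forall>f'\<in>X. f \<noteq> f' \<longrightarrow>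
               measure_pmf.prob (snd \<D>) {I. f \<in> I \<and> f' \<in> I} = 0))"

datatype 'u trm = Var nat | Cst 'u

datatype 'u fo =
    Atom rel "'u trm list"
  | Eq "'u trm" "'u trm"
  | Neg "'u fo"
  | Conj "'u fo" "'u fo"
  | Disj "'u fo" "'u fo"
  | Ex nat "'u fo"
  | All nat "'u fo"

fun trm_consts :: "'u trm \<Rightarrow> 'u set" where
  "trm_consts (Var x) = {}"
| "trm_consts (Cst c) = {c}"

fun trm_vars :: "'u trm \<Rightarrow> nat set" where
  "trm_vars (Var x) = {x}"
| "trm_vars (Cst c) = {}"

fun fo_consts :: "'u fo \<Rightarrow> 'u set" where
  "fo_consts (Atom R ts) = (\<Union>t\<in>set ts. trm_consts t)"
| "fo_consts (Eq t1 t2) = trm_consts t1 \<union> trm_consts t2"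
| "fo_consts (Neg \<phi>) = fo_consts \<phi>"
| "fo_consts (Conj \<phi> \<psi>) = fo_consts \<phi> \<union> fo_consts \<psi>"
| "fo_consts (Disj \<phi> \<psi>) = fo_consts \<phi> \<union> fo_consts \<psi>"
| "fo_consts (Ex x \<phi>) = fo_consts \<phi>"
| "fo_consts (All x \<phi>) = fo_consts \<phi>"

fun fo_free :: "'u fo \<Rightarrow> nat set" where
  "fo_free (Atom R ts) = (\<Union>t\<in>set ts. trm_vars t)"
| "fo_free (Eq t1 t2) = trm_vars t1 \<union> trm_vars t2"
| "fo_free (Neg \<phi>) = fo_free \<phi>"
| "fo_free (Conj \<phi> \<psi>) = fo_free \<phi> \<union> fo_free \<psi>"
| "fo_free (Disj \<phi> \<psi>) = fo_free \<phi> \<union> fo_free \<psi>"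
| "fo_free (Ex x \<phi>) = fo_free \<phi> - {x}"
| "fo_free (All x \<phi>) = fo_free \<phi> - {x}"

fun fo_over :: "rel set \<Rightarrow> 'u fo \<Rightarrow> bool" where
  "fo_over S (Atom R ts) \<longleftrightarrow> R \<in> S \<and> length ts = arity R"
| "fo_over S (Eq t1 t2) \<longleftrightarrow> True"
| "fo_over S (Neg \<phi>) \<longleftrightarrow> fo_over S \<phi>"
| "fo_over S (Conj \<phi> \<psi>) \<longleftrightarrow> fo_over S \<phi> \<and> fo_over S \<psi>"
| "fo_over S (Disj \<phi> \<psi>) \<longleftrightarrow> fo_over S \<phi> \<and> fo_over S \<psi>"
| "fo_over S (Ex x \<phi>) \<longleftrightarrow> fo_over S \<phi>"
| "fo_over S (All x \<phi>) \<longleftrightarrow> fo_over S \<phi>"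

fun is_ucq :: "'u fo \<Rightarrow> bool" where
  "is_ucq (Atom R ts) \<longleftrightarrow> True"
| "is_ucq (Eq t1 t2) \<longleftrightarrow> True"
| "is_ucq (Neg \<phi>) \<longleftrightarrow> False"
| "is_ucq (Conj \<phi> \<psi>) \<longleftrightarrow> is_ucq \<phi> \<and> is_ucq \<psi>"
| "is_ucq (Disj \<phi> \<psi>) \<longleftrightarrow> is_ucq \<phi> \<and> is_ucq \<psi>"
| "is_ucq (Ex x \<phi>) \<longleftrightarrow> is_ucq \<phi>"
| "is_ucq (All x \<phi>) \<longleftrightarrow> False"

fun trm_eval :: "(nat \<Rightarrow> 'u) \<Rightarrow> 'u trm \<Rightarrow> 'u" where
  "trm_eval A (Var x) = A x"
| "trm_eval A (Cst c) = c"

fun sat :: "'u set \<Rightarrow> 'u fact set \<Rightarrow> (nat \<Rightarrow> 'u) \<Rightarrow> 'u fo \<Rightarrow> bool" where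
  "sat Dom D A (Atom R ts) \<longleftrightarrow> (R, map (trm_eval A) ts) \<in> D"
| "sat Dom D A (Eq t1 t2) \<longleftrightarrow> trm_eval A t1 = trm_eval A t2"
| "sat Dom D A (Neg \<phi>) \<longleftrightarrow> \<not> sat Dom D A \<phi>"
| "sat Dom D A (Conj \<phi> \<psi>) \<longleftrightarrow> sat Dom D A \<phi> \<and> sat Dom D A \<psi>"
| "sat Dom D A (Disj \<phi> \<psi>) \<longleftrightarrow> sat Dom D A \<phi> \<or> sat Dom D A \<psi>"
| "sat Dom D A (Ex x \<phi>) \<longleftrightarrow> (\<exists>a\<in>Dom. sat Dom D (A(x := a)) \<phi>)"
| "sat Dom D A (All x \<phi>) \<longleftrightarrow> (\<forall>a\<in>Dom. sat Dom D (A(x := a)) \<phi>)"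

definition sat_adom :: "'u fact set \<Rightarrow> 'u fo \<Rightarrow> 'u list \<Rightarrow> bool" where
  "sat_adom D \<phi> as \<longleftrightarrow> sat (adom D \<union> fo_consts \<phi>) D (\<lambda>i. as ! i) \<phi>"

definition fo_view :: "rel set \<Rightarrow> rel set \<Rightarrow> (rel \<Rightarrow> 'u fo) \<Rightarrow> bool" where
  "fo_view S T \<Phi> \<longleftrightarrow> schema T \<and>
     (\<forall>R\<in>T. fo_over S (\<Phi> R) \<and> fo_free (\<Phi> R) \<subseteq> {..<arity R})"

definition ucq_view :: "rel set \<Rightarrow> rel set \<Rightarrow> (rel \<Rightarrow> 'u fo) \<Rightarrow> bool" where
  "ucq_view S T \<Phi> \<longleftrightarrow> fo_view S T \<Phi> \<and> (\<forall>R\<in>T. is_ucq (\<Phi> R))"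

definition view_apply :: "rel set \<Rightarrow> (rel \<Rightarrow> 'u fo) \<Rightarrow> 'u fact set \<Rightarrow> 'u fact set" where
  "view_apply T \<Phi> D =
     {(R, as) | R as. R \<in> T \<and> length as = arity R \<and>
        set as \<subseteq> adom D \<union> fo_consts (\<Phi> R) \<and> sat_adom D (\<Phi> R) as}"

definition pdb_image :: "rel set \<Rightarrow> (rel \<Rightarrow> 'u fo) \<Rightarrow> 'u pdb \<Rightarrow> 'u pdb" where
  "pdb_image T \<Phi> \<D> = (T, map_pmf (view_apply T \<Phi>) (snd \<D>))"

definition UCQ_BID :: "'u pdb set" where
  "UCQ_BID = {pdb_image T \<Phi> \<I> | T \<Phi> \<I>. is_BID \<I> \<and> ucq_view (fst \<I>) T \<Phi>}"

definition FO_BID :: "'u pdb set" where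
  "FO_BID = {pdb_image T \<Phi> \<I> | T \<Phi> \<I>. is_BID \<I> \<and> fo_view (fst \<I>) T \<Phi>}"

end

theory Submission
  imports Defs
begin

definition pp :: "nat \<Rightarrow> real" where "pp k = 1 / (2^(k+2) - 1)"

lemma pp_pos: "0 < pp k" and pp_less1: "pp k < 1"
proof -
  have "(1::real) \<le> 2^k" by simp
  then have h: "1 < (4::real)*2^k" "1 < (2::real)*2^k" by linarith+
  then show "0 < pp k" "pp k < 1" unfolding pp_def by (auto simp: divide_less_eq)
qed

fun Bn :: "nat \<Rightarrow> nat set pmf" where
  "Bn 0 = return_pmf {}"
| "Bn (Suc n) = bind_pmf (Bn n) (\<lambda>S. map_pmf (\<lambda>b. if b then insert n S else S) (bernoulli_pmf (pp n)))"

lemma Bn_sub: "S \<in> set_pmf (Bn n) \<Longrightarrow> S \<subseteq> {..<n}"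
proof (induction n arbitrary: S)
  case (Suc n)
  from Suc.prems have "S \<in> (\<Union>T\<in>set_pmf (Bn n). (\<lambda>b. if b then insert n T else T) ` set_pmf (bernoulli_pmf (pp n)))"
    unfolding Bn.simps set_bind_pmf set_map_pmf by simp
  then obtain T b where "T \<in> set_pmf (Bn n)" "S = (if b then insert n T else T)" by blast
  then show ?case using Suc.IH[of T] by auto
qed simp

lemma Bn_full: "{..<n} \<in> set_pmf (Bn n)"
proof (induction n)
  case 0 then show ?case by simp
next
  case (Suc n)
  have "insert n {..<n} = {..<Suc n}" by auto
  have t: "True \<in> set_pmf (bernoulli_pmf (pp n))" using pp_pos[of n] pp_less1[of n] by simp
  have "insert n {..<n} \<in> set_pmf (map_pmf (\<lambda>b. if b then insert n {..<n} else {..<n}) (bernoulli_pmf (pp n)))"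
    unfolding set_map_pmf by (rule image_eqI[OF _ t]) simp
  then have "insert n {..<n} \<in> set_pmf (Bn (Suc n))"
    unfolding Bn.simps set_bind_pmf using Suc.IH by blast
  then show ?case using \<open>insert n {..<n} = {..<Suc n}\<close> by simp
qed

lemma prob_bind_pmf:
  "measure_pmf.prob (bind_pmf M f) X = (\<integral>x. measure_pmf.prob (f x) X \<partial>M)"
  unfolding measure_pmf_bind
  by (rule measure_pmf.measure_bind[where N="count_space UNIV"]) (auto simp: space_subprob_algebra measure_pmf.subprob_space_axioms)

lemma prob_bernoulli_set:
  assumes "0 \<le> p" "p \<le> 1"
  shows "measure_pmf.prob (bernoulli_pmf p) B = (if True \<in> B then p else 0) + (if False \<in> B then 1 - p else 0)"
proof -
  have e: "B = (if True \<in> B then {True} else {}) \<union> (if False \<in> B then {False} else {})"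
    by (rule set_eqI) (case_tac x; simp)
  show ?thesis
  proof (cases "True \<in> B")
    case True
    then show ?thesis
    proof (cases "False \<in> B")
      case False
      then show ?thesis using \<open>True \<in> B\<close> assms by (subst e) (simp add: measure_measure_pmf_finite)
    qed (subst e, simp add: measure_measure_pmf_finite assms)
  next
    case False
    then show ?thesis
    proof (cases "False \<in> B")
      case False
      then show ?thesis using \<open>True \<notin> B\<close> assms by (subst e) (simp add: measure_measure_pmf_finite)
    qed (subst e, simp add: measure_measure_pmf_finite assms)
  qed
qed

lemma pmf_integrable_ind: "integrable (measure_pmf M) (indicator A :: _ \<Rightarrow> real)"
  by (rule integrable_real_indicator) (auto simp: measure_pmf.emeasure_finite less_top[symmetric])

lemma integral_two_ind:
  "(\<integral>x. a * indicator A x + b * indicator B x \<partial>measure_pmf M) = a * measure_pmf.prob M A + (b::real) * measure_pmf.prob M B"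
proof -
  have "(\<integral>x. a * indicator A x + b * indicator B x \<partial>measure_pmf M) =
    (\<integral>x. a * indicator A x \<partial>measure_pmf M) + (\<integral>x. b * indicator B x \<partial>measure_pmf M)"
    by (rule Bochner_Integration.integral_add; intro integrable_mult_right pmf_integrable_ind)
  then show ?thesis by simp
qed

lemma Bn_prob:
  "finite K \<Longrightarrow> measure_pmf.prob (Bn n) {S. K \<subseteq> S} = (if K \<subseteq> {..<n} then (\<Prod>k\<in>K. pp k) else 0)"
proof (induction n arbitrary: K)
  case 0
  then show ?case by (simp add: indicator_def)
next
  case (Suc n)
  have p01: "0 \<le> pp n" "pp n \<le> 1" using pp_pos[of n] pp_less1[of n] by auto
  have inner: "measure_pmf.prob (map_pmf (\<lambda>b. if b then insert n S else S) (bernoulli_pmf (pp n))) {S. K \<subseteq> S}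
     = pp n * indicator {S. K - {n} \<subseteq> S} S + (1 - pp n) * indicator {S. K \<subseteq> S} S" for S
  proof -
    have "measure_pmf.prob (map_pmf (\<lambda>b. if b then insert n S else S) (bernoulli_pmf (pp n))) {S. K \<subseteq> S}
      = measure_pmf.prob (bernoulli_pmf (pp n)) {b. K \<subseteq> (if b then insert n S else S)}"
      by (simp add: measure_map_pmf vimage_def)
    also have "\<dots> = (if K \<subseteq> insert n S then pp n else 0) + (if K \<subseteq> S then 1 - pp n else 0)"
      by (simp add: prob_bernoulli_set[OF p01])
    also have "(K \<subseteq> insert n S) = (K - {n} \<subseteq> S)" by blast
    finally show ?thesis by (simp add: indicator_def)
  qed
  have "measure_pmf.prob (Bn (Suc n)) {S. K \<subseteq> S} =
     (\<integral>S. pp n * indicator {S. K - {n} \<subseteq> S} S + (1 - pp n) * indicator {S. K \<subseteq> S} S \<partial>Bn n)"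
    by (simp only: Bn.simps prob_bind_pmf inner)
  also have "\<dots> = pp n * measure_pmf.prob (Bn n) {S. K - {n} \<subseteq> S} + (1 - pp n) * measure_pmf.prob (Bn n) {S. K \<subseteq> S}"
    by (rule integral_two_ind)
  also have "\<dots> = (if K \<subseteq> {..<Suc n} then (\<Prod>k\<in>K. pp k) else 0)"
  proof -
    have fK: "finite (K - {n})" using Suc.prems by auto
    show ?thesis
    proof (cases "n \<in> K")
      case True
      then have "\<not> K \<subseteq> {..<n}" by auto
      moreover have "(\<Prod>k\<in>K. pp k) = pp n * (\<Prod>k\<in>K - {n}. pp k)"
        using True Suc.prems by (simp add: prod.remove)
      moreover have "(K - {n} \<subseteq> {..<n}) = (K \<subseteq> {..<Suc n})" unfolding lessThan_Suc by blast
      ultimately show ?thesis using Suc.IH[OF fK] Suc.IH[OF Suc.prems] by simp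
    next
      case False
      then have "K - {n} = K" by auto
      moreover have "(K \<subseteq> {..<n}) = (K \<subseteq> {..<Suc n})" using False unfolding lessThan_Suc by blast
      ultimately show ?thesis using Suc.IH[OF Suc.prems] by (simp add: algebra_simps)
    qed
  qed
  finally show ?case .
qed

definition Qpmf :: "nat set pmf" where
  "Qpmf = bind_pmf (geometric_pmf (1/2))
     (\<lambda>j. if j = 0 then return_pmf {} else map_pmf (insert (j - 1)) (Bn (j - 1)))"

lemma geom_single: "measure_pmf.prob (geometric_pmf (1/2)) {j} = (1/2)^(Suc j)"
  by (simp add: measure_pmf_single)

lemma geom_lt: "measure_pmf.prob (geometric_pmf (1/2)) {..<a} = 1 - (1/2)^a"
proof (induction a)
  case 0 then show ?case by simp
next
  case (Suc a)
  have "{..<Suc a} = insert a {..<a}" by auto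
  then have "measure_pmf.prob (geometric_pmf (1/2)) {..<Suc a} =
     (\<Sum>j\<in>insert a {..<a}. pmf (geometric_pmf (1/2)) j)"
    by (simp add: measure_measure_pmf_finite)
  also have "\<dots> = pmf (geometric_pmf (1/2)) a + (\<Sum>j\<in>{..<a}. pmf (geometric_pmf (1/2)) j)"
    by simp
  also have "(\<Sum>j\<in>{..<a}. pmf (geometric_pmf (1/2)) j) = 1 - (1/2)^a"
    using Suc by (simp add: measure_measure_pmf_finite)
  finally show ?case by simp
qed

lemma geom_tail: "measure_pmf.prob (geometric_pmf (1/2)) {a..} = (1/2)^a"
proof -
  have e: "{a..} = space (measure_pmf (geometric_pmf (1/2))) - {..<a}" by auto
  have "measure_pmf.prob (geometric_pmf (1/2)) (space (measure_pmf (geometric_pmf (1/2))) - {..<a})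
      = 1 - measure_pmf.prob (geometric_pmf (1/2)) {..<a}"
    by (rule measure_pmf.prob_compl) simp
  then show ?thesis unfolding e[symmetric] geom_lt by simp
qed

lemma pp_eq: "(1/2)^(Suc (Suc m)) * (1 + pp m) = pp m"
proof -
  define x :: real where "x = 2^(m+2)"
  have x1: "x > 1" unfolding x_def
    using one_less_power[of "2::real" "m+2"] by simp
  have "(1/2::real)^(Suc (Suc m)) = 1 / x" unfolding x_def by (simp add: power_one_over)
  moreover have "pp m = 1 / (x - 1)" unfolding pp_def x_def by simp
  ultimately show ?thesis using x1 by (simp add: field_simps)
qed

lemma Q_prob:
  assumes "finite K"
  shows "measure_pmf.prob Qpmf {A. K \<subseteq> A} = (\<Prod>k\<in>K. pp k)"
proof (cases "K = {}")
  case True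
  then show ?thesis by simp
next
  case False
  define m where "m = Max K"
  have mK: "m \<in> K" and mx: "\<And>k. k \<in> K \<Longrightarrow> k \<le> m"
    using assms False unfolding m_def by auto
  define c1 where "c1 = (\<Prod>k\<in>K - {m}. pp k)"
  define c2 where "c2 = (\<Prod>k\<in>K. pp k)"
  have c2: "c2 = pp m * c1" unfolding c1_def c2_def using assms mK by (simp add: prod.remove)
  have h: "measure_pmf.prob (if j = 0 then return_pmf {} else map_pmf (insert (j - 1)) (Bn (j - 1))) {A. K \<subseteq> A}
     = c1 * indicator {Suc m} j + c2 * indicator {Suc (Suc m)..} j" for j
  proof (cases j)
    case 0
    then show ?thesis using False by (simp add: indicator_def)
  next
    case (Suc i)
    have "measure_pmf.prob (map_pmf (insert i) (Bn i)) {A. K \<subseteq> A} = measure_pmf.prob (Bn i) {S. K - {i} \<subseteq> S}"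
      by (simp add: measure_map_pmf vimage_def Diff_subset_conv)
    also have "\<dots> = (if K - {i} \<subseteq> {..<i} then (\<Prod>k\<in>K - {i}. pp k) else 0)"
      using assms by (simp add: Bn_prob)
    also have "\<dots> = c1 * indicator {Suc m} j + c2 * indicator {Suc (Suc m)..} j"
    proof (cases "i < m")
      case True
      then have "\<not> K - {i} \<subseteq> {..<i}" using mK by auto
      then show ?thesis using True Suc by (simp add: indicator_def)
    next
      case False
      show ?thesis
      proof (cases "i = m")
        case True
        have "K - {i} \<subseteq> {..<i}" using mx True le_neq_implies_less by blast
        then show ?thesis using True Suc c1_def by (simp add: indicator_def)
      next
        case False
        with \<open>\<not> i < m\<close> have im: "m < i" by simp
        then have "i \<notin> K" using mx not_le by blast
        then have "K - {i} = K" by simp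
        moreover have "K \<subseteq> {..<i}" using mx im le_less_trans by blast
        ultimately show ?thesis using im Suc c2_def by (simp add: indicator_def)
      qed
    qed
    finally show ?thesis using Suc by simp
  qed
  have "measure_pmf.prob Qpmf {A. K \<subseteq> A} =
     (\<integral>j. c1 * indicator {Suc m} j + c2 * indicator {Suc (Suc m)..} j \<partial>geometric_pmf (1/2))"
    unfolding Qpmf_def prob_bind_pmf h ..
  also have "\<dots> = c1 * (1/2)^(Suc (Suc m)) + c2 * (1/2)^(Suc (Suc m))"
    by (simp only: integral_two_ind geom_single geom_tail)
  also have "\<dots> = c1 * ((1/2)^(Suc (Suc m)) * (1 + pp m))" using c2 by (simp add: algebra_simps)
  also have "\<dots> = c2" using c2 pp_eq[of m] by simp
  finally show ?thesis unfolding c2_def .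
qed

lemma Q_finite: "A \<in> set_pmf Qpmf \<Longrightarrow> finite A"
proof -
  assume "A \<in> set_pmf Qpmf"
  then obtain j where j: "A \<in> set_pmf (if j = 0 then return_pmf {} else map_pmf (insert (j - 1)) (Bn (j - 1)))"
    unfolding Qpmf_def set_bind_pmf by blast
  show "finite A"
  proof (cases "j = 0")
    case True then show ?thesis using j by simp
  next
    case False
    then obtain S where "S \<in> set_pmf (Bn (j - 1))" "A = insert (j - 1) S" using j by auto
    then show ?thesis using Bn_sub[of S "j - 1"] finite_subset[of S "{..<j - 1}"] by simp
  qed
qed

lemma Q_full: "{..<Suc n} \<in> set_pmf Qpmf"
proof -
  have a: "insert n {..<n} \<in> set_pmf (map_pmf (insert n) (Bn n))"
    unfolding set_map_pmf by (rule imageI) (rule Bn_full)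
  have b: "Suc n \<in> set_pmf (geometric_pmf (1/2))" by (simp add: set_pmf_geometric)
  have "insert n {..<n} \<in> set_pmf (if Suc n = 0 then return_pmf {} else map_pmf (insert (Suc n - 1)) (Bn (Suc n - 1)))"
    using a by simp
  then have "insert n {..<n} \<in> set_pmf Qpmf"
    unfolding Qpmf_def set_bind_pmf using b by blast
  moreover have "insert n {..<n} = {..<Suc n}" by auto
  ultimately show ?thesis by simp
qed

lemma sat_mono:
  "is_ucq \<phi> \<Longrightarrow> Dom \<subseteq> Dom' \<Longrightarrow> D \<subseteq> D' \<Longrightarrow> sat Dom D \<sigma> \<phi> \<Longrightarrow> sat Dom' D' \<sigma> \<phi>"
proof (induction \<phi> arbitrary: \<sigma>)
  case (Ex x \<phi>)
  then obtain a where "a \<in> Dom" "sat Dom D (\<sigma>(x := a)) \<phi>" by auto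
  then show ?case using Ex by auto
qed auto

lemma adom_mono: "D \<subseteq> D' \<Longrightarrow> adom D \<subseteq> adom D'"
  unfolding adom_def by blast

lemma view_mono:
  assumes "\<forall>R\<in>T. is_ucq (\<Phi> R)" "D \<subseteq> D'"
  shows "view_apply T \<Phi> D \<subseteq> view_apply T \<Phi> D'"
proof
  fix g assume "g \<in> view_apply T \<Phi> D"
  then obtain R as where g: "g = (R, as)" "R \<in> T" "length as = arity R"
    "set as \<subseteq> adom D \<union> fo_consts (\<Phi> R)" "sat_adom D (\<Phi> R) as"
    unfolding view_apply_def by blast
  have "set as \<subseteq> adom D' \<union> fo_consts (\<Phi> R)" using g(4) adom_mono[OF assms(2)] by blast
  moreover have "sat_adom D' (\<Phi> R) as"
    using g(5) sat_mono[of "\<Phi> R" "adom D \<union> fo_consts (\<Phi> R)" "adom D' \<union> fo_consts (\<Phi> R)" D D']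
      assms g(2) adom_mono[OF assms(2)] unfolding sat_adom_def by blast
  ultimately show "g \<in> view_apply T \<Phi> D'" using g unfolding view_apply_def by blast
qed

lemma adom_view: "adom (view_apply T \<Phi> D) \<subseteq> adom D \<union> (\<Union>R\<in>T. fo_consts (\<Phi> R))"
  unfolding view_apply_def adom_def by fastforce

lemma finite_trm_consts: "finite (trm_consts t)"
  by (cases t) auto

lemma finite_fo_consts: "finite (fo_consts \<phi>)"
  by (induction \<phi>) (auto simp: finite_trm_consts)

lemma adom_card:
  assumes "instance_over S M" "finite S"
  shows "card (adom M) \<le> card M * Max (arity ` S)" "finite (adom M)"
proof -
  have fM: "finite M" using assms unfolding instance_over_def by auto
  have "card (adom M) \<le> (\<Sum>f\<in>M. card (set (snd f)))"
    unfolding adom_def using fM by (rule card_UN_le)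
  also have "\<dots> \<le> (\<Sum>f\<in>M. Max (arity ` S))"
  proof (rule sum_mono)
    fix f assume "f \<in> M"
    then have "fst f \<in> S" "length (snd f) = arity (fst f)"
      using assms unfolding instance_over_def fact_over_def by auto
    then have "length (snd f) \<le> Max (arity ` S)" using assms(2) by (simp add: Max_ge)
    then show "card (set (snd f)) \<le> Max (arity ` S)" using card_length le_trans by blast
  qed
  also have "\<dots> = card M * Max (arity ` S)" by simp
  finally show "card (adom M) \<le> card M * Max (arity ` S)" .
  show "finite (adom M)" unfolding adom_def using fM by simp
qed

locale bidl =
  fixes S :: "rel set" and P :: "('u::countable) fact set pmf" and B :: "'u fact set set"
  assumes pdb: "is_pdb (S, P)"
    and cover: "\<Union>B = pdb_facts P"
    and nemp: "{} \<notin> B"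
    and disj: "\<forall>X\<in>B. \<forall>Y\<in>B. X \<noteq> Y \<longrightarrow> X \<inter> Y = {}"
    and indep: "\<forall>F. finite F \<and> F \<subseteq> pdb_facts P \<and>
               (\<forall>f\<in>F. \<forall>f'\<in>F. \<forall>X\<in>B. f \<noteq> f' \<and> f \<in> X \<longrightarrow> f' \<notin> X) \<longrightarrow>
               measure_pmf.prob P {I. F \<subseteq> I} =
               (\<Prod>f\<in>F. measure_pmf.prob P {I. f \<in> I})"
    and excl: "\<forall>X\<in>B. \<forall>f\<in>X. \<forall>f'\<in>X. f \<noteq> f' \<longrightarrow>
               measure_pmf.prob P {I. f \<in> I \<and> f' \<in> I} = 0"
begin

abbreviation pr where "pr E \<equiv> measure_pmf.prob P E"

definition good :: "'u fact set \<Rightarrow> bool" where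
  "good F \<longleftrightarrow> F \<subseteq> pdb_facts P \<and> (\<forall>f\<in>F. \<forall>f'\<in>F. \<forall>X\<in>B. f \<noteq> f' \<and> f \<in> X \<longrightarrow> f' \<notin> X)"

lemma supp_finite: "D \<in> set_pmf P \<Longrightarrow> finite D"
  using pdb unfolding is_pdb_def instance_over_def by auto

lemma pos: "D \<in> set_pmf P \<Longrightarrow> D \<in> E \<Longrightarrow> pr E > 0"
proof -
  assume a: "D \<in> set_pmf P" "D \<in> E"
  have "pr {D} \<le> pr E" using a(2) by (intro measure_pmf.finite_measure_mono) auto
  moreover have "pr {D} > 0" using a(1) by (simp add: measure_pmf_single pmf_positive)
  ultimately show ?thesis by simp
qed

lemma zero_out: "pr E = 0 \<Longrightarrow> D \<in> set_pmf P \<Longrightarrow> D \<notin> E"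
  using pos by fastforce

lemma supp_sub: "D \<in> set_pmf P \<Longrightarrow> D \<subseteq> pdb_facts P"
  unfolding pdb_facts_def by auto

lemma bad_zero:
  assumes "\<not> good F"
  shows "pr {I. F \<subseteq> I} = 0"
proof -
  have "set_pmf P \<inter> {I. F \<subseteq> I} = {}"
  proof (rule ccontr)
    assume "set_pmf P \<inter> {I. F \<subseteq> I} \<noteq> {}"
    then obtain D where D: "D \<in> set_pmf P" "F \<subseteq> D" by auto
    then have "F \<subseteq> pdb_facts P" using supp_sub by auto
    with assms obtain f f' X where fx: "f \<in> F" "f' \<in> F" "X \<in> B" "f \<noteq> f'" "f \<in> X" "f' \<in> X"
      unfolding good_def by blast
    then have "pr {I. f \<in> I \<and> f' \<in> I} = 0" using excl[rule_format, of X f f'] by blast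
    moreover have "D \<in> {I. f \<in> I \<and> f' \<in> I}" using D fx by auto
    ultimately show False using zero_out D by blast
  qed
  then show ?thesis by (simp add: measure_pmf_zero_iff)
qed

lemma good_sub: "good F \<Longrightarrow> F' \<subseteq> F \<Longrightarrow> good F'"
  unfolding good_def by (elim conjE, intro conjI; (intro ballI impI)?; blast)

lemma prob_good: "finite F \<Longrightarrow> good F \<Longrightarrow> pr {I. F \<subseteq> I} = (\<Prod>f\<in>F. pr {I. f \<in> I})"
proof -
  assume "finite F" "good F"
  then have "finite F \<and> (F \<subseteq> pdb_facts P \<and> (\<forall>f\<in>F. \<forall>f'\<in>F. \<forall>X\<in>B. f \<noteq> f' \<and> f \<in> X \<longrightarrow> f' \<notin> X))"
    unfolding good_def by (rule conjI)
  then show ?thesis by (rule mp[OF spec[OF indep]])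
qed

lemma pair_indep:
  assumes X: "X \<in> B" and F1: "finite F1" "F1 \<inter> X = {}" and F2: "finite F2" "F2 \<subseteq> X"
  shows "pr {I. F1 \<union> F2 \<subseteq> I} = pr {I. F1 \<subseteq> I} * pr {I. F2 \<subseteq> I}"
proof (cases "good (F1 \<union> F2)")
  case True
  then have g1: "good F1" and g2: "good F2" using good_sub by blast+
  have d: "F1 \<inter> F2 = {}" using F1 F2 by blast
  show ?thesis
    using prob_good[OF _ True] prob_good[OF F1(1) g1] prob_good[OF F2(1) g2] F1 F2 d
    by (simp add: prod.union_disjoint)
next
  case False
  have "\<not> good F1 \<or> \<not> good F2"
  proof (rule ccontr)
    assume "\<not> (\<not> good F1 \<or> \<not> good F2)"
    then have g1: "good F1" and g2: "good F2" by auto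
    have "F1 \<union> F2 \<subseteq> pdb_facts P" using g1 g2 unfolding good_def by auto
    moreover have "\<forall>f\<in>F1 \<union> F2. \<forall>f'\<in>F1 \<union> F2. \<forall>Y\<in>B. f \<noteq> f' \<and> f \<in> Y \<longrightarrow> f' \<notin> Y"
    proof (intro ballI impI)
      fix f f' Y assume a: "f \<in> F1 \<union> F2" "f' \<in> F1 \<union> F2" "Y \<in> B" "f \<noteq> f' \<and> f \<in> Y"
      show "f' \<notin> Y"
      proof
        assume fY: "f' \<in> Y"
        consider "f \<in> F1" "f' \<in> F1" | "f \<in> F2" "f' \<in> F2" | "f \<in> F1" "f' \<in> F2" | "f \<in> F2" "f' \<in> F1"
          using a by blast
        then show False
        proof cases
          case 1 then show ?thesis using g1 a fY unfolding good_def by blast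
        next
          case 2 then show ?thesis using g2 a fY unfolding good_def by blast
        next
          case 3
          then have "f' \<in> X \<inter> Y" using F2 fY by blast
          then have "X = Y" using disj X a(3) by blast
          then show ?thesis using 3 a F1 by blast
        next
          case 4
          then have "f \<in> X \<inter> Y" using F2 a by blast
          then have "X = Y" using disj X a(3) by blast
          then show ?thesis using 4 fY F1 by blast
        qed
      qed
    qed
    ultimately have "good (F1 \<union> F2)" unfolding good_def by blast
    then show False using False by blast
  qed
  have z: "pr {I. F1 \<union> F2 \<subseteq> I} = 0" by (rule bad_zero[OF False])
  from \<open>\<not> good F1 \<or> \<not> good F2\<close> show ?thesis
  proof
    assume "\<not> good F1" then show ?thesis using z bad_zero[of F1] by simp
  next
    assume "\<not> good F2" then show ?thesis using z bad_zero[of F2] by simp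
  qed
qed

lemma remove:
  assumes D: "D \<in> set_pmf P" and f: "f \<in> D" "f \<in> X" and X: "X \<in> B"
    and nz: "pr {I. I \<inter> X = {}} \<noteq> 0"
  shows "D - {f} \<in> set_pmf P"
proof -
  define G where "G = D - {f}"
  have GX: "G \<inter> X = {}"
  proof (rule ccontr)
    assume "G \<inter> X \<noteq> {}"
    then obtain g where g: "g \<in> D" "g \<noteq> f" "g \<in> X" unfolding G_def by auto
    have "pr {I. f \<in> I \<and> g \<in> I} = 0" using excl[rule_format, of X f g] X f g by simp
    moreover have "D \<in> {I. f \<in> I \<and> g \<in> I}" using f g by simp
    ultimately show False using zero_out D by blast
  qed
  define P1 where "P1 = {{I. F \<subseteq> I} | F. finite F \<and> F \<inter> X = {}}"
  define P2 where "P2 = {{I. F \<subseteq> I} | F. finite F \<and> F \<subseteq> X}"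
  have ind: "prob_space.indep_set (measure_pmf P) P1 P2"
  proof (rule prob_space.indep_setI[OF prob_space_measure_pmf])
    fix a b assume ab: "a \<in> P1" "b \<in> P2"
    from ab(1) obtain F1 where F1: "a = {I. F1 \<subseteq> I}" "finite F1" "F1 \<inter> X = {}" unfolding P1_def by blast
    from ab(2) obtain F2 where F2: "b = {I. F2 \<subseteq> I}" "finite F2" "F2 \<subseteq> X" unfolding P2_def by blast
    have "a \<inter> b = {I. F1 \<union> F2 \<subseteq> I}" using F1 F2 by auto
    then show "pr (a \<inter> b) = pr a * pr b" using pair_indep[OF X F1(2,3) F2(2,3)] F1(1) F2(1) by simp
  qed simp_all
  have st1: "Int_stable P1" unfolding Int_stable_def
  proof (intro ballI)
    fix a b assume ab: "a \<in> P1" "b \<in> P1"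
    from ab(1) obtain F1 where F1: "a = {I. F1 \<subseteq> I}" "finite F1" "F1 \<inter> X = {}" unfolding P1_def by blast
    from ab(2) obtain F2 where F2: "b = {I. F2 \<subseteq> I}" "finite F2" "F2 \<inter> X = {}" unfolding P1_def by blast
    have "a \<inter> b = {I. F1 \<union> F2 \<subseteq> I}" using F1 F2 by auto
    moreover have "finite (F1 \<union> F2) \<and> (F1 \<union> F2) \<inter> X = {}" using F1 F2 by auto
    ultimately show "a \<inter> b \<in> P1" unfolding P1_def by blast
  qed
  have st2: "Int_stable P2" unfolding Int_stable_def
  proof (intro ballI)
    fix a b assume ab: "a \<in> P2" "b \<in> P2"
    from ab(1) obtain F1 where F1: "a = {I. F1 \<subseteq> I}" "finite F1" "F1 \<subseteq> X" unfolding P2_def by blast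
    from ab(2) obtain F2 where F2: "b = {I. F2 \<subseteq> I}" "finite F2" "F2 \<subseteq> X" unfolding P2_def by blast
    have "a \<inter> b = {I. F1 \<union> F2 \<subseteq> I}" using F1 F2 by auto
    moreover have "finite (F1 \<union> F2) \<and> (F1 \<union> F2) \<subseteq> X" using F1 F2 by auto
    ultimately show "a \<inter> b \<in> P2" unfolding P2_def by blast
  qed
  have ind2: "prob_space.indep_set (measure_pmf P) (sigma_sets UNIV P1) (sigma_sets UNIV P2)"
    using prob_space.indep_set_sigma_sets[OF prob_space_measure_pmf ind st1 st2] by simp
  define A where "A = {I. I - X = G}"
  define E0 where "E0 = {I. I \<inter> X = ({}::'u fact set)}"
  have sa1: "sigma_algebra UNIV (sigma_sets UNIV P1)" by (rule sigma_algebra_sigma_sets) simp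
  have sa2: "sigma_algebra UNIV (sigma_sets UNIV P2)" by (rule sigma_algebra_sigma_sets) simp
  define Ax where "Ax x = (if x \<in> X then UNIV else if x \<in> G then {I. x \<in> I} else UNIV - {I. x \<in> I})" for x
  have b1: "{I. x \<in> I} \<in> sigma_sets UNIV P1" if "x \<notin> X" for x
  proof -
    have "{I. x \<in> I} = {I. {x} \<subseteq> I}" by auto
    moreover have "{I. {x} \<subseteq> I} \<in> P1" unfolding P1_def using that by blast
    ultimately show ?thesis by (simp add: sigma_sets.Basic)
  qed
  have b2: "{I. x \<in> I} \<in> sigma_sets UNIV P2" if "x \<in> X" for x
  proof -
    have "{I. x \<in> I} = {I. {x} \<subseteq> I}" by auto
    moreover have "{I. {x} \<subseteq> I} \<in> P2" unfolding P2_def using that by blast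
    ultimately show ?thesis by (simp add: sigma_sets.Basic)
  qed
  have top1: "UNIV \<in> sigma_sets UNIV P1" by (rule sigma_sets_top)
  have top2: "UNIV \<in> sigma_sets UNIV P2" by (rule sigma_sets_top)
  have Ax_in: "Ax x \<in> sigma_sets UNIV P1" for x
  proof (cases "x \<in> X")
    case True then show ?thesis unfolding Ax_def using top1 by simp
  next
    case False
    show ?thesis
    proof (cases "x \<in> G")
      case True then show ?thesis using False b1[OF False] unfolding Ax_def by simp
    next
      case False2: False
      show ?thesis using False False2 sigma_sets.Compl[OF b1[OF False]] unfolding Ax_def by simp
    qed
  qed
  have A_eq: "A = (\<Inter>x\<in>UNIV. Ax x)"
  proof (rule set_eqI)
    fix I
    show "I \<in> A \<longleftrightarrow> I \<in> (\<Inter>x\<in>UNIV. Ax x)"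
    proof
      assume "I \<in> A"
      then have IG: "I - X = G" unfolding A_def by simp
      have "I \<in> Ax x" for x
      proof (cases "x \<in> X")
        case True then show ?thesis unfolding Ax_def by simp
      next
        case False
        then have "x \<in> I \<longleftrightarrow> x \<in> G" using IG by blast
        then show ?thesis using False unfolding Ax_def by simp
      qed
      then show "I \<in> (\<Inter>x\<in>UNIV. Ax x)" by blast
    next
      assume a: "I \<in> (\<Inter>x\<in>UNIV. Ax x)"
      have "I - X = G"
      proof (rule set_eqI)
        fix x
        have Ix: "I \<in> Ax x" using a by blast
        show "x \<in> I - X \<longleftrightarrow> x \<in> G"
        proof (cases "x \<in> X")
          case True then show ?thesis using GX by blast
        next
          case False
          then show ?thesis using Ix unfolding Ax_def by (cases "x \<in> G") simp_all
        qed
      qed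
      then show "I \<in> A" unfolding A_def by simp
    qed
  qed
  have A_in: "A \<in> sigma_sets UNIV P1"
    unfolding A_eq
    by (rule sigma_algebra.countable_INT''[OF sa1 top1]) (simp_all add: Ax_in)
  define Ex where "Ex x = (if x \<in> X then UNIV - {I. x \<in> I} else UNIV)" for x
  have Ex_in: "Ex x \<in> sigma_sets UNIV P2" for x
  proof (cases "x \<in> X")
    case True
    show ?thesis using True sigma_sets.Compl[OF b2[OF True]] unfolding Ex_def by simp
  next
    case False then show ?thesis unfolding Ex_def using top2 by simp
  qed
  have E_eq: "E0 = (\<Inter>x\<in>UNIV. Ex x)"
  proof (rule set_eqI)
    fix I
    have "I \<in> E0 \<longleftrightarrow> (\<forall>x. I \<in> Ex x)"
    proof
      assume "I \<in> E0"
      then have "I \<inter> X = {}" unfolding E0_def by simp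
      then show "\<forall>x. I \<in> Ex x" unfolding Ex_def by auto
    next
      assume a: "\<forall>x. I \<in> Ex x"
      have "x \<notin> I" if "x \<in> X" for x using a[rule_format, of x] that unfolding Ex_def by simp
      then show "I \<in> E0" unfolding E0_def by blast
    qed
    then show "I \<in> E0 \<longleftrightarrow> I \<in> (\<Inter>x\<in>UNIV. Ex x)" by blast
  qed
  have E_in: "E0 \<in> sigma_sets UNIV P2"
    unfolding E_eq
    by (rule sigma_algebra.countable_INT''[OF sa2 top2]) (simp_all add: Ex_in)
  have prod: "pr (A \<inter> E0) = pr A * pr E0"
    by (rule prob_space.indep_setD[OF prob_space_measure_pmf ind2 A_in E_in])
  have AE: "A \<inter> E0 = {G}"
  proof (rule set_eqI)
    fix I
    show "I \<in> A \<inter> E0 \<longleftrightarrow> I \<in> {G}"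
    proof
      assume "I \<in> A \<inter> E0"
      then have "I - X = G" "I \<inter> X = {}" unfolding A_def E0_def by auto
      then have "I = G" by blast
      then show "I \<in> {G}" by simp
    next
      assume "I \<in> {G}"
      then have "I = G" by simp
      then show "I \<in> A \<inter> E0" unfolding A_def E0_def using GX by blast
    qed
  qed
  have DX: "D - X = G"
  proof -
    have "x = f" if "x \<in> D" "x \<in> X" for x
      using GX that unfolding G_def by blast
    then show ?thesis unfolding G_def using f by blast
  qed
  have pA: "pr A > 0" using pos[OF D] DX unfolding A_def by simp
  have pE: "pr E0 > 0" using nz measure_nonneg[of "measure_pmf P" E0] unfolding E0_def by linarith
  have "pmf P G > 0" using prod AE pA pE by (simp add: measure_pmf_single)
  then show ?thesis unfolding G_def by (simp add: set_pmf_iff)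
qed

lemma descent:
  "D \<in> set_pmf P \<Longrightarrow> \<exists>M\<in>set_pmf P. M \<subseteq> D \<and> (\<forall>f\<in>M. \<forall>X\<in>B. f \<in> X \<longrightarrow> pr {I. I \<inter> X = {}} = 0)"
proof (induction "card D" arbitrary: D rule: less_induct)
  case less
  show ?case
  proof (cases "\<forall>f\<in>D. \<forall>X\<in>B. f \<in> X \<longrightarrow> pr {I. I \<inter> X = {}} = 0")
    case True
    then show ?thesis using less.prems by blast
  next
    case False
    then obtain f X where fX: "f \<in> D" "X \<in> B" "f \<in> X" "pr {I. I \<inter> X = {}} \<noteq> 0" by blast
    have D': "D - {f} \<in> set_pmf P" by (rule remove[OF less.prems fX(1,3,2,4)])
    have "card (D - {f}) < card D" using supp_finite[OF less.prems] fX(1) by (rule card_Diff1_less)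
    from less.hyps[OF this D'] obtain M where "M \<in> set_pmf P" "M \<subseteq> D - {f}"
      "\<forall>f\<in>M. \<forall>X\<in>B. f \<in> X \<longrightarrow> pr {I. I \<inter> X = {}} = 0" by blast
    then show ?thesis by blast
  qed
qed

lemma forced_card:
  assumes M: "M \<in> set_pmf P" and forced: "\<forall>f\<in>M. \<forall>X\<in>B. f \<in> X \<longrightarrow> pr {I. I \<inter> X = {}} = 0"
    and D0: "D0 \<in> set_pmf P"
  shows "card M \<le> card D0"
proof -
  have ex: "\<exists>g. g \<in> D0 \<and> (\<exists>X\<in>B. f \<in> X \<and> g \<in> X)" if fM: "f \<in> M" for f
  proof -
    have "f \<in> \<Union>B" using supp_sub[OF M] fM cover by blast
    then obtain X where X: "X \<in> B" "f \<in> X" by blast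
    then have "pr {I. I \<inter> X = {}} = 0" using forced fM by blast
    then have "D0 \<notin> {I. I \<inter> X = {}}" using zero_out D0 by blast
    then obtain g where "g \<in> D0" "g \<in> X" by blast
    then show ?thesis using X by blast
  qed
  then have "\<forall>f\<in>M. \<exists>g. g \<in> D0 \<and> (\<exists>X\<in>B. f \<in> X \<and> g \<in> X)" by blast
  from bchoice[OF this] obtain h where h0: "\<forall>f\<in>M. h f \<in> D0 \<and> (\<exists>X\<in>B. f \<in> X \<and> h f \<in> X)"
    by (elim exE)
  have h: "h f \<in> D0 \<and> (\<exists>X\<in>B. f \<in> X \<and> h f \<in> X)" if "f \<in> M" for f
    using h0 that by blast
  have "inj_on h M"
  proof (rule inj_onI)
    fix f f' assume a: "f \<in> M" "f' \<in> M" "h f = h f'"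
    obtain X where X: "X \<in> B" "f \<in> X" "h f \<in> X" using h[OF a(1)] by blast
    obtain Y where Y: "Y \<in> B" "f' \<in> Y" "h f' \<in> Y" using h[OF a(2)] by blast
    have "h f \<in> X \<inter> Y" using X Y a(3) by simp
    then have "X = Y" using disj X(1) Y(1) by blast
    show "f = f'"
    proof (rule ccontr)
      assume "f \<noteq> f'"
      then have "pr {I. f \<in> I \<and> f' \<in> I} = 0" using excl[rule_format, of X f f'] X Y \<open>X = Y\<close> by simp
      moreover have "M \<in> {I. f \<in> I \<and> f' \<in> I}" using a by simp
      ultimately show False using zero_out M by blast
    qed
  qed
  moreover have "h ` M \<subseteq> D0" using h by blast
  ultimately show ?thesis using supp_finite[OF D0] by (rule card_inj_on_le)
qed

end

definition emb :: "nat \<Rightarrow> 'u::{countable,infinite}" where "emb = (SOME f. inj f)"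

lemma inj_emb: "inj (emb :: nat \<Rightarrow> 'u::{countable,infinite})"
proof -
  have "\<exists>f::nat \<Rightarrow> 'u. inj f \<and> range f \<subseteq> UNIV"
    using infinite_iff_countable_subset[of "UNIV :: 'u set"] infinite_UNIV by blast
  then have "\<exists>f::nat \<Rightarrow> 'u. inj f" by blast
  then show ?thesis unfolding emb_def by (rule someI_ex)
qed

lemma emb_eq[simp]: "(emb i = (emb j :: 'u::{countable,infinite})) \<longleftrightarrow> i = j"
  using inj_emb[where 'u='u] by (auto dest: injD)

definition SuccR :: rel where "SuccR = (0, 2)"
definition SuccO :: rel where "SuccO = (1, 2)"
definition StartO :: rel where "StartO = (2, 1)"
definition EndO :: rel where "EndO = (3, 1)"
definition ZO :: rel where "ZO = (4, 0)"

lemma rel_arities[simp]: "arity SuccR = 2" "arity SuccO = 2" "arity StartO = 1" "arity EndO = 1" "arity ZO = 0"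
  by (simp_all add: arity_def SuccR_def SuccO_def StartO_def EndO_def ZO_def)

lemma rel_distinct[simp]:
  "SuccO \<noteq> StartO" "SuccO \<noteq> EndO" "SuccO \<noteq> ZO" "StartO \<noteq> EndO" "StartO \<noteq> ZO" "EndO \<noteq> ZO"
  "StartO \<noteq> SuccO" "EndO \<noteq> SuccO" "ZO \<noteq> SuccO" "EndO \<noteq> StartO" "ZO \<noteq> StartO" "ZO \<noteq> EndO"
  by (simp_all add: SuccO_def StartO_def EndO_def ZO_def)

definition ef :: "nat \<Rightarrow> ('u::{countable,infinite}) fact" where
  "ef k = (SuccR, [emb k, emb (Suc k)])"

lemma inj_ef: "inj (ef :: nat \<Rightarrow> ('u::{countable,infinite}) fact)"
  by (rule injI) (simp add: ef_def)

lemma mem_ef_image: "((SuccR, [x, y]) \<in> ef ` A) \<longleftrightarrow> (\<exists>k\<in>A. x = emb k \<and> y = emb (Suc k))"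
  unfolding ef_def by auto

definition P0 :: "('u::{countable,infinite}) fact set pmf" where
  "P0 = map_pmf (\<lambda>A. ef ` A) Qpmf"

definition atm :: "nat \<Rightarrow> nat \<Rightarrow> 'u fo" where "atm i j = Atom SuccR [Var i, Var j]"

definition Phi0 :: "rel \<Rightarrow> 'u fo" where
  "Phi0 R = (if R = SuccO then atm 0 1
     else if R = StartO then Conj (Ex 1 (atm 0 1)) (Neg (Ex 1 (atm 1 0)))
     else if R = EndO then Conj (Ex 1 (atm 1 0)) (Neg (Ex 1 (atm 0 1)))
     else Neg (Ex 0 (Ex 1 (atm 0 1))))"

definition T0 :: "rel set" where "T0 = {SuccO, StartO, EndO, ZO}"

lemma consts_Phi0[simp]: "fo_consts (Phi0 R) = {}"
  unfolding Phi0_def atm_def by simp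

lemma Phi0_simps[simp]:
  "Phi0 SuccO = atm 0 1"
  "Phi0 StartO = Conj (Ex 1 (atm 0 1)) (Neg (Ex 1 (atm 1 0)))"
  "Phi0 EndO = Conj (Ex 1 (atm 1 0)) (Neg (Ex 1 (atm 0 1)))"
  "Phi0 ZO = Neg (Ex 0 (Ex 1 (atm 0 1)))"
  unfolding Phi0_def by simp_all

lemma consts_atm[simp]: "fo_consts (atm i j) = {}"
  by (simp add: atm_def)

lemma sat_atm: "sat Dom D \<sigma> (atm i j) \<longleftrightarrow> (SuccR, [\<sigma> i, \<sigma> j]) \<in> D"
  by (simp add: atm_def)

lemma in_adom: "(R, xs) \<in> D \<Longrightarrow> x \<in> set xs \<Longrightarrow> x \<in> adom D"
  unfolding adom_def by force

lemma in_adom2: "(R, [x, y]) \<in> D \<Longrightarrow> x \<in> adom D \<and> y \<in> adom D"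
  using in_adom[of R "[x, y]" D] by simp

lemma sat_ex_out: "u \<noteq> v \<Longrightarrow> sat (adom D) D \<sigma> (Ex v (atm u v)) \<longleftrightarrow> (\<exists>y. (SuccR, [\<sigma> u, y]) \<in> D)"
  by (simp add: sat_atm) (blast dest: in_adom2)

lemma sat_ex_in: "u \<noteq> v \<Longrightarrow> sat (adom D) D \<sigma> (Ex v (atm v u)) \<longleftrightarrow> (\<exists>y. (SuccR, [y, \<sigma> u]) \<in> D)"
  by (simp add: sat_atm) (blast dest: in_adom2)

lemma sat_ex_any: "u \<noteq> v \<Longrightarrow> sat (adom D) D \<sigma> (Ex u (Ex v (atm u v))) \<longleftrightarrow> (\<exists>x y. (SuccR, [x, y]) \<in> D)"
  by (simp add: sat_atm) (blast dest: in_adom2)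

lemma mem_view_apply: "(R, as) \<in> view_apply T \<Phi> D \<longleftrightarrow>
   R \<in> T \<and> length as = arity R \<and> set as \<subseteq> adom D \<union> fo_consts (\<Phi> R) \<and> sat_adom D (\<Phi> R) as"
  unfolding view_apply_def by blast

abbreviation V0 :: "('u::{countable,infinite}) fact set \<Rightarrow> 'u fact set" where
  "V0 \<equiv> view_apply T0 Phi0"

lemma V0_Start: "(StartO, [x]) \<in> V0 D \<longleftrightarrow> (\<exists>y. (SuccR, [x, y]) \<in> D) \<and> \<not> (\<exists>y. (SuccR, [y, x]) \<in> D)"
proof -
  have "(StartO, [x]) \<in> V0 D \<longleftrightarrow> x \<in> adom D \<and> sat (adom D) D (\<lambda>i. [x] ! i) (Phi0 StartO)"
    by (simp add: mem_view_apply sat_adom_def T0_def del: sat.simps(6))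
  also have "\<dots> \<longleftrightarrow> (\<exists>y. (SuccR, [x, y]) \<in> D) \<and> \<not> (\<exists>y. (SuccR, [y, x]) \<in> D)"
    by (simp add: sat_ex_out sat_ex_in del: sat.simps(6)) (blast dest: in_adom2)
  finally show ?thesis .
qed

lemma V0_End: "(EndO, [x]) \<in> V0 D \<longleftrightarrow> (\<exists>y. (SuccR, [y, x]) \<in> D) \<and> \<not> (\<exists>y. (SuccR, [x, y]) \<in> D)"
proof -
  have "(EndO, [x]) \<in> V0 D \<longleftrightarrow> x \<in> adom D \<and> sat (adom D) D (\<lambda>i. [x] ! i) (Phi0 EndO)"
    by (simp add: mem_view_apply sat_adom_def T0_def del: sat.simps(6))
  also have "\<dots> \<longleftrightarrow> (\<exists>y. (SuccR, [y, x]) \<in> D) \<and> \<not> (\<exists>y. (SuccR, [x, y]) \<in> D)"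
    by (simp add: sat_ex_out sat_ex_in del: sat.simps(6)) (blast dest: in_adom2)
  finally show ?thesis .
qed

lemma V0_Z: "(ZO, []) \<in> V0 D \<longleftrightarrow> \<not> (\<exists>x y. (SuccR, [x, y]) \<in> D)"
proof -
  have "(ZO, []) \<in> V0 D \<longleftrightarrow> sat (adom D) D (\<lambda>i. [] ! i) (Phi0 ZO)"
    by (simp add: mem_view_apply sat_adom_def T0_def del: sat.simps(6))
  also have "\<dots> \<longleftrightarrow> \<not> (\<exists>x y. (SuccR, [x, y]) \<in> D)"
    by (simp add: sat_ex_any del: sat.simps(6))
  finally show ?thesis .
qed

lemma V0_Succ: "(SuccO, [x, y]) \<in> V0 D \<longleftrightarrow> (SuccR, [x, y]) \<in> D"
proof -
  have "(SuccO, [x, y]) \<in> V0 D \<longleftrightarrow> x \<in> adom D \<and> y \<in> adom D \<and> sat (adom D) D (\<lambda>i. [x, y] ! i) (Phi0 SuccO)"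
    by (simp add: mem_view_apply sat_adom_def T0_def del: sat.simps(6))
  also have "\<dots> \<longleftrightarrow> (SuccR, [x, y]) \<in> D"
    by (simp add: sat_atm) (blast dest: in_adom2)
  finally show ?thesis .
qed

lemma down_closed:
  fixes A :: "nat set"
  assumes "\<And>k. k \<in> A \<Longrightarrow> k > 0 \<Longrightarrow> k - 1 \<in> A"
  shows "m \<in> A \<Longrightarrow> j \<le> m \<Longrightarrow> j \<in> A"
proof (induction m)
  case 0 then show ?case by simp
next
  case (Suc k)
  show ?case
  proof (cases "j = Suc k")
    case True then show ?thesis using Suc by simp
  next
    case False
    have "k \<in> A" using assms[OF Suc.prems(1)] by simp
    then show ?thesis using Suc False by simp
  qed
qed

lemma key:
  assumes fin: "finite A" and n: "n \<ge> 1"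
    and sub: "V0 (ef ` A) \<subseteq> (V0 (ef ` {..<n}) :: ('u::{countable,infinite}) fact set)"
  shows "(emb ` {..n} :: 'u set) \<subseteq> adom (V0 (ef ` A) :: 'u fact set)"
proof -
  let ?W = "V0 (ef ` {..<n}) :: 'u fact set"
  have Wa: "x = emb 0" if "(StartO, [x]) \<in> ?W" for x
  proof -
    from that obtain k y where k: "k < n" "x = emb k" "y = emb (Suc k)"
      and np: "\<not> (\<exists>y. (SuccR, [y, x]) \<in> ef ` {..<n})"
      unfolding V0_Start mem_ef_image by auto
    show ?thesis
    proof (cases k)
      case 0 then show ?thesis using k by simp
    next
      case (Suc j)
      then have "(SuccR, [emb j, x]) \<in> ef ` {..<n}" using k unfolding mem_ef_image by auto
      then show ?thesis using np by blast
    qed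
  qed
  have Wb: "x = emb n" if "(EndO, [x]) \<in> ?W" for x
  proof -
    from that obtain k where k: "k < n" "x = emb (Suc k)"
      and ns: "\<not> (\<exists>y. (SuccR, [x, y]) \<in> ef ` {..<n})"
      unfolding V0_End mem_ef_image by auto
    show ?thesis
    proof (cases "Suc k < n")
      case True
      then have "(SuccR, [x, emb (Suc (Suc k))]) \<in> ef ` {..<n}" using k unfolding mem_ef_image by auto
      then show ?thesis using ns by blast
    next
      case False then show ?thesis using k by simp
    qed
  qed
  have Wc: "(ZO, []) \<notin> ?W"
  proof -
    have "(SuccR, [emb 0, emb (Suc 0)]) \<in> (ef ` {..<n} :: 'u fact set)" using n unfolding mem_ef_image by auto
    then show ?thesis unfolding V0_Z by blast
  qed
  have Ane: "A \<noteq> {}"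
  proof
    assume "A = {}"
    then have "(ZO, []) \<in> V0 (ef ` A :: 'u fact set)" unfolding V0_Z mem_ef_image by simp
    then show False using sub Wc by blast
  qed
  have down: "k - 1 \<in> A" if kA: "k \<in> A" and k0: "k > 0" for k
  proof (rule ccontr)
    assume nk: "k - 1 \<notin> A"
    have "(StartO, [emb k]) \<in> V0 (ef ` A :: 'u fact set)"
      unfolding V0_Start mem_ef_image
    proof
      show "\<exists>y. \<exists>j\<in>A. (emb k :: 'u) = emb j \<and> y = emb (Suc j)" using kA by blast
      show "\<not> (\<exists>y. \<exists>j\<in>A. y = emb j \<and> (emb k :: 'u) = emb (Suc j))"
      proof
        assume "\<exists>y. \<exists>j\<in>A. y = emb j \<and> (emb k :: 'u) = emb (Suc j)"
        then obtain j where "j \<in> A" "k = Suc j" by auto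
        then show False using nk by simp
      qed
    qed
    then have "(StartO, [emb k]) \<in> ?W" using sub by blast
    then have "(emb k :: 'u) = emb 0" by (rule Wa)
    then show False using k0 by simp
  qed
  define b where "b = Max A"
  have bA: "b \<in> A" unfolding b_def by (rule Max_in[OF fin Ane])
  have bmax: "j \<le> b" if "j \<in> A" for j unfolding b_def by (rule Max_ge[OF fin that])
  have "(EndO, [emb (Suc b)]) \<in> V0 (ef ` A :: 'u fact set)"
    unfolding V0_End mem_ef_image
  proof
    show "\<exists>y. \<exists>j\<in>A. y = emb j \<and> (emb (Suc b) :: 'u) = emb (Suc j)"
      by (rule exI[of _ "emb b"], rule bexI[OF _ bA]) simp
    show "\<not> (\<exists>y. \<exists>j\<in>A. (emb (Suc b) :: 'u) = emb j \<and> y = emb (Suc j))"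
    proof
      assume "\<exists>y. \<exists>j\<in>A. (emb (Suc b) :: 'u) = emb j \<and> y = emb (Suc j)"
      then obtain y j where "j \<in> A" "(emb (Suc b) :: 'u) = emb j" by blast
      then have "Suc b \<in> A" by simp
      then show False using bmax[of "Suc b"] by simp
    qed
  qed
  then have "(EndO, [emb (Suc b)]) \<in> ?W" using sub by blast
  then have "(emb (Suc b) :: 'u) = emb n" by (rule Wb)
  then have nb: "n = Suc b" by simp
  have allA: "j \<in> A" if "j \<le> b" for j
    by (rule down_closed[of A b j, OF down bA that])
  show ?thesis
  proof
    fix x assume "x \<in> (emb ` {..n} :: 'u set)"
    then obtain j where j: "j \<le> n" "x = emb j" by blast
    show "x \<in> adom (V0 (ef ` A :: 'u fact set))"
    proof (cases "j < n")
      case True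
      then have "j \<in> A" using allA nb by simp
      then have "(SuccO, [emb j, emb (Suc j)]) \<in> V0 (ef ` A :: 'u fact set)"
        unfolding V0_Succ mem_ef_image by (rule bexI[rotated]) simp
      from in_adom2[OF this] show ?thesis using j by simp
    next
      case False
      then have "j = Suc b" using j nb by simp
      have "(SuccO, [emb b, emb (Suc b)]) \<in> V0 (ef ` A :: 'u fact set)"
        unfolding V0_Succ mem_ef_image by (rule bexI[OF _ bA]) simp
      from in_adom2[OF this] show ?thesis using j \<open>j = Suc b\<close> by simp
    qed
  qed
qed

lemma set_P0: "set_pmf P0 = (\<lambda>A. ef ` A) ` set_pmf Qpmf"
  unfolding P0_def by simp

lemma ef_in_facts: "ef k \<in> pdb_facts (P0 :: ('u::{countable,infinite}) fact set pmf)"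
proof -
  have "(ef ` {..<Suc k} :: 'u fact set) \<in> set_pmf P0" unfolding set_P0 using Q_full by blast
  moreover have "ef k \<in> (ef ` {..<Suc k} :: 'u fact set)" by simp
  ultimately show ?thesis unfolding pdb_facts_def by blast
qed

lemma facts_P0: "pdb_facts (P0 :: ('u::{countable,infinite}) fact set pmf) = range ef"
proof
  show "pdb_facts (P0 :: 'u fact set pmf) \<subseteq> range ef" unfolding pdb_facts_def set_P0 by blast
  show "range ef \<subseteq> pdb_facts (P0 :: 'u fact set pmf)" using ef_in_facts by blast
qed

lemma prob_P0_sub:
  assumes "finite K"
  shows "measure_pmf.prob (P0 :: ('u::{countable,infinite}) fact set pmf) {I. ef ` K \<subseteq> I} = (\<Prod>k\<in>K. pp k)"
proof -
  have "(\<lambda>A. ef ` A) -` {I. ef ` K \<subseteq> I} = {A. K \<subseteq> A}"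
    by (simp add: vimage_def inj_image_subset_iff[OF inj_ef])
  note e = this
  show ?thesis unfolding P0_def measure_map_pmf e by (rule Q_prob[OF assms])
qed

lemma BID0: "is_BID ({SuccR}, (P0 :: ('u::{countable,infinite}) fact set pmf))"
  unfolding is_BID_def
proof (intro conjI)
  show "is_pdb ({SuccR}, (P0 :: 'u fact set pmf))"
    unfolding is_pdb_def schema_def instance_over_def fact_over_def
  proof (intro conjI ballI)
    fix D assume "D \<in> set_pmf (snd ({SuccR}, (P0 :: 'u fact set pmf)))"
    then obtain A where A: "A \<in> set_pmf Qpmf" "D = ef ` A" by (auto simp: set_P0)
    show "finite D" using A Q_finite by simp
  next
    fix D f assume "D \<in> set_pmf (snd ({SuccR}, (P0 :: 'u fact set pmf)))" "f \<in> D"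
    then obtain k where "f = ef k" by (auto simp: set_P0)
    then show "fst f \<in> fst ({SuccR}, (P0 :: 'u fact set pmf))" "length (snd f) = arity (fst f)"
      by (simp_all add: ef_def)
  qed simp_all
  let ?B = "(\<lambda>k. {ef k :: 'u fact}) ` UNIV"
  show "\<exists>B. \<Union>B = pdb_facts (snd ({SuccR}, (P0 :: 'u fact set pmf))) \<and> {} \<notin> B \<and>
          (\<forall>X\<in>B. \<forall>Y\<in>B. X \<noteq> Y \<longrightarrow> X \<inter> Y = {}) \<and>
          (\<forall>F. finite F \<and> F \<subseteq> pdb_facts (snd ({SuccR}, (P0 :: 'u fact set pmf))) \<and>
               (\<forall>f\<in>F. \<forall>f'\<in>F. \<forall>X\<in>B. f \<noteq> f' \<and> f \<in> X \<longrightarrow> f' \<notin> X) \<longrightarrow>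
               measure_pmf.prob (snd ({SuccR}, (P0 :: 'u fact set pmf))) {I. F \<subseteq> I} =
               (\<Prod>f\<in>F. measure_pmf.prob (snd ({SuccR}, (P0 :: 'u fact set pmf))) {I. f \<in> I})) \<and>
          (\<forall>X\<in>B. \<forall>f\<in>X. \<forall>f'\<in>X. f \<noteq> f' \<longrightarrow>
               measure_pmf.prob (snd ({SuccR}, (P0 :: 'u fact set pmf))) {I. f \<in> I \<and> f' \<in> I} = 0)"
  proof (rule exI[of _ ?B], intro conjI)
    show "\<Union>?B = pdb_facts (snd ({SuccR}, (P0 :: 'u fact set pmf)))" unfolding snd_conv facts_P0 by blast
    show "{} \<notin> ?B" by blast
    show "\<forall>X\<in>?B. \<forall>Y\<in>?B. X \<noteq> Y \<longrightarrow> X \<inter> Y = {}" by auto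
    show "\<forall>X\<in>?B. \<forall>f\<in>X. \<forall>f'\<in>X. f \<noteq> f' \<longrightarrow>
               measure_pmf.prob (snd ({SuccR}, (P0 :: 'u fact set pmf))) {I. f \<in> I \<and> f' \<in> I} = 0"
      by blast
    show "\<forall>F. finite F \<and> F \<subseteq> pdb_facts (snd ({SuccR}, (P0 :: 'u fact set pmf))) \<and>
               (\<forall>f\<in>F. \<forall>f'\<in>F. \<forall>X\<in>?B. f \<noteq> f' \<and> f \<in> X \<longrightarrow> f' \<notin> X) \<longrightarrow>
               measure_pmf.prob (snd ({SuccR}, (P0 :: 'u fact set pmf))) {I. F \<subseteq> I} =
               (\<Prod>f\<in>F. measure_pmf.prob (snd ({SuccR}, (P0 :: 'u fact set pmf))) {I. f \<in> I})"
    proof (intro allI impI)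
      fix F :: "'u fact set"
      assume a: "finite F \<and> F \<subseteq> pdb_facts (snd ({SuccR}, (P0 :: 'u fact set pmf))) \<and>
               (\<forall>f\<in>F. \<forall>f'\<in>F. \<forall>X\<in>?B. f \<noteq> f' \<and> f \<in> X \<longrightarrow> f' \<notin> X)"
      have fF: "finite F" using conjunct1[OF a] .
      have "F \<subseteq> pdb_facts (snd ({SuccR}, (P0 :: 'u fact set pmf)))" using conjunct1[OF conjunct2[OF a]] .
      then have Fr: "F \<subseteq> range ef" by (simp only: snd_conv facts_P0)
      define K where "K = ef -` F"
      have FK: "F = ef ` K" unfolding K_def image_vimage_eq by (rule Int_absorb2[OF Fr, symmetric])
      have fK: "finite K" unfolding K_def by (rule finite_vimageI[OF fF inj_ef])
      have inj: "inj_on ef K" by (rule inj_on_subset[OF inj_ef]) simp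
      have "measure_pmf.prob (P0 :: 'u fact set pmf) {I. F \<subseteq> I} = (\<Prod>k\<in>K. pp k)"
        unfolding FK by (rule prob_P0_sub[OF fK])
      also have "\<dots> = (\<Prod>k\<in>K. measure_pmf.prob (P0 :: 'u fact set pmf) {I. ef k \<in> I})"
      proof (rule prod.cong)
        fix k assume "k \<in> K"
        have "measure_pmf.prob (P0 :: 'u fact set pmf) {I. ef ` {k} \<subseteq> I} = (\<Prod>k\<in>{k}. pp k)"
          by (rule prob_P0_sub) simp
        then show "pp k = measure_pmf.prob (P0 :: 'u fact set pmf) {I. ef k \<in> I}" by simp
      qed simp
      also have "\<dots> = (\<Prod>f\<in>F. measure_pmf.prob (P0 :: 'u fact set pmf) {I. f \<in> I})"
        unfolding FK using prod.reindex[OF inj, of "\<lambda>f. measure_pmf.prob (P0 :: 'u fact set pmf) {I. f \<in> I}"]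
        by simp
      finally show "measure_pmf.prob (snd ({SuccR}, (P0 :: 'u fact set pmf))) {I. F \<subseteq> I} =
               (\<Prod>f\<in>F. measure_pmf.prob (snd ({SuccR}, (P0 :: 'u fact set pmf))) {I. f \<in> I})" by simp
    qed
  qed
qed

lemma fo_free_atm[simp]: "fo_free (atm i j) = {i, j}"
  by (auto simp: atm_def)

lemma fo_over_atm[simp]: "fo_over S (atm i j) \<longleftrightarrow> SuccR \<in> S"
  by (simp add: atm_def)

lemma fo0: "fo_view {SuccR} T0 (Phi0 :: rel \<Rightarrow> ('u::{countable,infinite}) fo)"
  unfolding fo_view_def schema_def T0_def by auto

theorem proposition7p14:
  "(UCQ_BID :: ('u :: {countable, infinite}) pdb set) \<subset> FO_BID"
proof
  show "(UCQ_BID :: 'u pdb set) \<subseteq> FO_BID"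
    unfolding UCQ_BID_def FO_BID_def ucq_view_def by blast
  define ex :: "'u pdb" where "ex = pdb_image T0 Phi0 ({SuccR}, P0)"
  have exF: "ex \<in> FO_BID" unfolding FO_BID_def ex_def
    by (intro CollectI exI[of _ T0] exI[of _ Phi0] exI[of _ "({SuccR}, P0)"] conjI refl BID0) (simp add: fo0)
  have "ex \<notin> UCQ_BID"
  proof
    assume "ex \<in> UCQ_BID"
    then obtain T \<Phi> J where exJ: "ex = pdb_image T \<Phi> J" and bJ: "is_BID J" and uJ: "ucq_view (fst J) T \<Phi>"
      unfolding UCQ_BID_def by blast
    obtain S P where J: "J = (S, P)" by (cases J)
    have TT: "T = T0" and mp: "map_pmf (view_apply T \<Phi>) P = map_pmf V0 (P0 :: 'u fact set pmf)"
      using exJ unfolding ex_def pdb_image_def J by simp_all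
    have pdbJ: "is_pdb (S, P)" using conjunct1[OF bJ[unfolded is_BID_def J]] .
    have "\<exists>B. bidl S P B"
      using conjunct2[OF bJ[unfolded is_BID_def J snd_conv]]
      by (elim exE conjE) (rule exI, rule bidl.intro[OF pdbJ], assumption+)
    then obtain B where "bidl S P B" ..
    then interpret bidl S P B .
    have ucq: "\<forall>R\<in>T. is_ucq (\<Phi> R)" using uJ unfolding ucq_view_def by blast
    have finT: "finite T" using uJ unfolding ucq_view_def fo_view_def schema_def by blast
    have finS: "finite S" using pdbJ unfolding is_pdb_def schema_def by simp
    define VA where "VA = view_apply T \<Phi>"
    have supp: "VA ` set_pmf P = V0 ` set_pmf (P0 :: 'u fact set pmf)"
      using arg_cong[OF mp, of set_pmf] unfolding VA_def by simp
    obtain D0 where D0: "D0 \<in> set_pmf P" using set_pmf_not_empty[of P] by blast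
    define C where "C = (\<Union>R\<in>T. fo_consts (\<Phi> R))"
    have finC: "finite C" unfolding C_def using finT finite_fo_consts by blast
    define N where "N = card D0 * Max (arity ` S)"
    define n where "n = N + card C + 1"
    have n1: "n \<ge> 1" unfolding n_def by simp
    have "{..<n} \<in> set_pmf Qpmf" using Q_full[of "n - 1"] n1 by simp
    then have "(ef ` {..<n} :: 'u fact set) \<in> set_pmf P0" unfolding set_P0 by blast
    then have "V0 (ef ` {..<n} :: 'u fact set) \<in> VA ` set_pmf P" unfolding supp by blast
    then obtain D where D: "D \<in> set_pmf P" and WD: "V0 (ef ` {..<n} :: 'u fact set) = VA D" by blast
    obtain M where M: "M \<in> set_pmf P" "M \<subseteq> D"
      and forced: "\<forall>f\<in>M. \<forall>X\<in>B. f \<in> X \<longrightarrow> measure_pmf.prob P {I. I \<inter> X = {}} = 0"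
      using descent[OF D] by blast
    have cM: "card M \<le> card D0" by (rule forced_card[OF M(1) forced D0])
    have instM: "instance_over S M" using pdbJ M(1) unfolding is_pdb_def by simp
    have "card (adom M) \<le> card M * Max (arity ` S)" by (rule adom_card(1)[OF instM finS])
    also have "\<dots> \<le> N" unfolding N_def using cM by simp
    finally have cadom: "card (adom M) \<le> N" .
    have finadom: "finite (adom M)" by (rule adom_card(2)[OF instM finS])
    have "VA M \<subseteq> VA D" unfolding VA_def by (rule view_mono[OF ucq M(2)])
    then have subW: "VA M \<subseteq> V0 (ef ` {..<n} :: 'u fact set)" using WD by simp
    have "VA M \<in> V0 ` set_pmf (P0 :: 'u fact set pmf)" using M(1) supp by blast
    then obtain A where A: "A \<in> set_pmf Qpmf" and VAM: "VA M = V0 (ef ` A :: 'u fact set)"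
      unfolding set_P0 by blast
    have "(emb ` {..n} :: 'u set) \<subseteq> adom (V0 (ef ` A :: 'u fact set))"
      by (rule key[OF Q_finite[OF A] n1]) (use subW VAM in simp)
    also have "\<dots> = adom (VA M)" using VAM by simp
    also have "\<dots> \<subseteq> adom M \<union> C" unfolding VA_def C_def by (rule adom_view)
    finally have sub: "(emb ` {..n} :: 'u set) \<subseteq> adom M \<union> C" .
    have "card (emb ` {..n} :: 'u set) = Suc n"
      using inj_emb[where 'u='u] by (simp add: card_image inj_on_subset)
    moreover have "card (emb ` {..n} :: 'u set) \<le> card (adom M \<union> C)"
      using sub finadom finC by (intro card_mono) simp_all
    moreover have "card (adom M \<union> C) \<le> card (adom M) + card C" by (rule card_Un_le)
    ultimately show False using cadom unfolding n_def by linarith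
  qed
  then show "(UCQ_BID :: 'u pdb set) \<noteq> FO_BID" using exF by blast
qed

end
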